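(* Let $I\subset\mathbb R$ be an interval and $\alpha\in C^\infty(I,C^\infty(\mathbb S))$ a real-valued solution of $\frac{\partial\alpha_\tau}{\partial\tau}=-\alpha_\tau(\Lambda\alpha_\tau)+(\mathcal H\alpha_\tau)(D\alpha_\tau)$ on $I$. Then $$\frac{\partial}{\partial\tau}\int_0^{2\pi}\alpha_\tau\,d\theta=-4\langle\alpha_{\tau,+},\Lambda\alpha_{\tau,+}\rangle\le0\quad(\tau\in I),$$ so $\int_0^{2\pi}\alpha_\tau d\theta$ is non-increasing in $\tau$; and if this derivative vanishes at some $\tau\in I$, then $\alpha_\tau$ is a constant function.
   Context: $\langle u,v\rangle=\int_0^{2\pi}u\bar v\,d\theta$; $u=\sum\hat u_ke^{ik\theta}$. $D=-i\,d/d\theta$, $\Lambda e^{in\theta}=|n|e^{in\theta}$, $\mathcal H\mathbf 1=0$, $\mathcal He^{in\theta}=\mathrm{sgn}(n)e^{in\theta}$ ($n\ne0$). For real $b$, $b_+=\hat b_0/2+\sum_{k\ge1}\hat b_ke^{ik\theta}$, and $\alpha_{\tau,+}=(\alpha_\tau)_+$. *)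

theory Defs
  imports "HOL-Analysis.Analysis"
begin

text \<open>C-infinity smoothness (relative to a set S) of a real-valued function on a
real normed vector space: continuous, differentiable within S, and every
directional derivative is again smooth.\<close>
coinductive smooth_on :: "'a::real_normed_vector set \<Rightarrow> ('a \<Rightarrow> real) \<Rightarrow> bool" where
  "\<lbrakk> continuous_on S f;
     \<forall>x\<in>S. f differentiable (at x within S);
     \<forall>v. smooth_on S (\<lambda>x. frechet_derivative f (at x within S) v) \<rbrakk>
   \<Longrightarrow> smooth_on S f"

text \<open>Fourier coefficients: u = sum_k (fc u k) e^{ik theta}.\<close>
definition fc :: "(real \<Rightarrow> complex) \<Rightarrow> int \<Rightarrow> complex" where
  "fc u k = integral {0..2*pi} (\<lambda>\<theta>. u \<theta> * exp (- (\<i> * of_int k * of_real \<theta>))) / (2 * of_real pi)"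

definition ip :: "(real \<Rightarrow> complex) \<Rightarrow> (real \<Rightarrow> complex) \<Rightarrow> complex" where
  "ip u v = integral {0..2*pi} (\<lambda>\<theta>. u \<theta> * cnj (v \<theta>))"

definition Lam :: "(real \<Rightarrow> complex) \<Rightarrow> real \<Rightarrow> complex" where
  "Lam u \<theta> = (\<Sum>\<^sub>\<infinity>n\<in>(UNIV::int set). of_int \<bar>n\<bar> * fc u n * exp (\<i> * of_int n * of_real \<theta>))"

definition Hil :: "(real \<Rightarrow> complex) \<Rightarrow> real \<Rightarrow> complex" where
  "Hil u \<theta> = (\<Sum>\<^sub>\<infinity>n\<in>(UNIV::int set). of_int (sgn n) * fc u n * exp (\<i> * of_int n * of_real \<theta>))"

definition Dop :: "(real \<Rightarrow> complex) \<Rightarrow> real \<Rightarrow> complex" where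
  "Dop u \<theta> = - \<i> * vector_derivative u (at \<theta>)"

definition pos_part :: "(real \<Rightarrow> complex) \<Rightarrow> real \<Rightarrow> complex" where
  "pos_part u \<theta> = fc u 0 / 2 + (\<Sum>\<^sub>\<infinity>k\<in>{1::int..}. fc u k * exp (\<i> * of_int k * of_real \<theta>))"

end

theory Submission
  imports Defs
begin


abbreviation E :: "int \<Rightarrow> real \<Rightarrow> complex" where
  "E k \<theta> \<equiv> exp (\<i> * of_int k * of_real \<theta>)"

lemma E_deriv: "((\<lambda>\<theta>. E k \<theta>) has_vector_derivative (\<i> * of_int k * E k \<theta>)) (at \<theta> within S)"
proof -
  have "((\<lambda>z. exp (\<i> * of_int k * z)) has_field_derivative (exp (\<i> * of_int k * of_real \<theta>) * (\<i> * of_int k))) (at (of_real \<theta>))"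
    by (auto intro!: derivative_eq_intros)
  from has_vector_derivative_real_field[OF this]
  show ?thesis by (auto intro: has_vector_derivative_at_within simp: mult_ac)
qed

lemma E_norm [simp]: "norm (E k \<theta>) = 1"
proof -
  have "\<i> * of_int k * of_real \<theta> = \<i> * of_real (of_int k * \<theta>)" by simp
  then show ?thesis by (simp only: norm_exp_i_times)
qed

lemma E_cont [continuous_intros]: "continuous_on S (\<lambda>\<theta>. E k \<theta>)"
  by (intro continuous_intros)

lemma E_2pi [simp]: "E k (2*pi) = 1"
proof -
  have "\<i> * of_int k * of_real (2*pi) = \<i> * (of_int k * (of_real pi * 2))" by simp
  then show ?thesis by (simp only: exp_2pi_1_int)
qed

lemma E_2pi' [simp]: "exp (\<i> * of_int k * (2 * of_real pi)) = 1"
  using E_2pi[of k] by simp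

lemma E_mult: "E j \<theta> * E k \<theta> = E (j+k) \<theta>"
  by (simp add: exp_add[symmetric] algebra_simps)

lemma E_cnj: "cnj (E k \<theta>) = E (-k) \<theta>"
  by (simp add: exp_cnj)

lemma E_neg: "exp (- (\<i> * of_int k * of_real \<theta>)) = E (-k) \<theta>"
  by simp

lemma E_integral: "((\<lambda>\<theta>. E k \<theta>) has_integral (if k = 0 then 2*pi else 0)) {0..2*pi}"
proof (cases "k = 0")
  case True
  then show ?thesis using has_integral_const_real[of "1::complex" 0 "2*pi"]
    by (simp add: scaleR_conv_of_real)
next
  case False
  have "((\<lambda>\<theta>. \<i> * of_int k * E k \<theta>) has_integral (E k (2*pi) - E k 0)) {0..2*pi}"
    by (rule fundamental_theorem_of_calculus) (auto intro: E_deriv)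
  then have "((\<lambda>\<theta>. \<i> * of_int k * E k \<theta>) has_integral 0) {0..2*pi}" by simp
  from has_integral_mult_right[OF this, of "1 / (\<i> * of_int k)"]
  show ?thesis using False by (simp add: field_simps)
qed

lemma E_integral': "integral {0..2*pi} (\<lambda>\<theta>. E k \<theta>) = (if k = 0 then 2*pi else 0)"
  using E_integral integral_unique by blast



lemma filterlim_int_intervals:
  "filterlim (\<lambda>N::nat. {-int N..int N}) (finite_subsets_at_top UNIV) sequentially"
  unfolding filterlim_finite_subsets_at_top
proof (safe, goal_cases)
  case (1 X)
  then obtain M where M: "\<forall>x\<in>X. \<bar>x\<bar> \<le> M"
    using finite_int_iff_bounded_le[of X] by auto
  show ?case using eventually_ge_at_top[of "nat M"]
    by eventually_elim (use M in force)
qed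

lemma infsum_int_tendsto:
  fixes f :: "int \<Rightarrow> 'a::{t2_space,topological_comm_monoid_add}"
  assumes "f summable_on UNIV"
  shows "(\<lambda>N::nat. \<Sum>k\<in>{-int N..int N}. f k) \<longlonglongrightarrow> infsum f UNIV"
  using filterlim_compose[OF infsum_tendsto[OF assms] filterlim_int_intervals] by (simp add: o_def)

lemma infsum_split_finite:
  fixes f :: "int \<Rightarrow> 'a::banach"
  assumes "f summable_on UNIV" "finite A"
  shows "infsum f UNIV = sum f A + infsum f (UNIV - A)"
proof -
  have "infsum f (A \<union> (UNIV - A)) = infsum f A + infsum f (UNIV - A)"
    by (rule infsum_Un_disjoint) (auto intro: summable_on_subset_banach[OF assms(1)] assms(2))
  then show ?thesis using assms(2) by simp
qed

lemma series_tail_bound: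
  fixes c :: "int \<Rightarrow> complex"
  assumes S: "(\<lambda>k. norm (c k)) summable_on UNIV"
  shows "norm ((\<Sum>\<^sub>\<infinity>k. c k * E k \<theta>) - (\<Sum>k\<in>{-int N..int N}. c k * E k \<theta>))
     \<le> (\<Sum>\<^sub>\<infinity>k. norm (c k)) - (\<Sum>k\<in>{-int N..int N}. norm (c k))"
proof -
  let ?A = "{-int N..int N}"
  have as: "(\<lambda>k. norm (c k * E k \<theta>)) summable_on UNIV" using S by (simp add: norm_mult)
  then have s: "(\<lambda>k. c k * E k \<theta>) summable_on UNIV" by (rule abs_summable_summable)
  have "(\<Sum>\<^sub>\<infinity>k. c k * E k \<theta>) - (\<Sum>k\<in>?A. c k * E k \<theta>) = (\<Sum>\<^sub>\<infinity>k\<in>UNIV-?A. c k * E k \<theta>)"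
    using infsum_split_finite[OF s, of ?A] by simp
  also have "norm \<dots> \<le> (\<Sum>\<^sub>\<infinity>k\<in>UNIV-?A. norm (c k * E k \<theta>))"
    by (rule norm_infsum_bound) (rule summable_on_subset_banach[OF as], auto)
  also have "\<dots> = (\<Sum>\<^sub>\<infinity>k\<in>UNIV-?A. norm (c k))" by (simp add: norm_mult)
  also have "\<dots> = (\<Sum>\<^sub>\<infinity>k. norm (c k)) - (\<Sum>k\<in>?A. norm (c k))"
    using infsum_split_finite[OF S, of ?A] by simp
  finally show ?thesis .
qed

lemma tail_tendsto:
  fixes c :: "int \<Rightarrow> complex"
  assumes S: "(\<lambda>k. norm (c k)) summable_on UNIV"
  shows "(\<lambda>N::nat. (\<Sum>\<^sub>\<infinity>k. norm (c k)) - (\<Sum>k\<in>{-int N..int N}. norm (c k))) \<longlonglongrightarrow> 0"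
proof -
  have "(\<lambda>N::nat. (\<Sum>\<^sub>\<infinity>k. norm (c k)) - (\<Sum>k\<in>{-int N..int N}. norm (c k))) \<longlonglongrightarrow>
        (\<Sum>\<^sub>\<infinity>k. norm (c k)) - (\<Sum>\<^sub>\<infinity>k. norm (c k))"
    by (intro tendsto_intros infsum_int_tendsto S)
  then show ?thesis by simp
qed

lemma series_cont:
  fixes c :: "int \<Rightarrow> complex"
  assumes S: "(\<lambda>k. norm (c k)) summable_on UNIV"
  shows "continuous_on A (\<lambda>\<theta>. \<Sum>\<^sub>\<infinity>k. c k * E k \<theta>)"
proof (rule uniform_limit_theorem)
  show "\<forall>\<^sub>F N in sequentially. continuous_on A (\<lambda>\<theta>. \<Sum>k\<in>{-int N..int N}. c k * E k \<theta>)"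
    by (intro always_eventually allI continuous_intros)
  show "uniform_limit A (\<lambda>N \<theta>. \<Sum>k\<in>{-int N..int N}. c k * E k \<theta>) (\<lambda>\<theta>. \<Sum>\<^sub>\<infinity>k. c k * E k \<theta>) sequentially"
    unfolding uniform_limit_iff
  proof (intro allI impI)
    fix e :: real assume "e > 0"
    from tail_tendsto[OF S] have "eventually (\<lambda>N. dist ((\<Sum>\<^sub>\<infinity>k. norm (c k)) - (\<Sum>k\<in>{-int N..int N}. norm (c k))) 0 < e) sequentially"
      using \<open>e>0\<close> tendstoD by blast
    then show "\<forall>\<^sub>F N in sequentially. \<forall>x\<in>A. dist (\<Sum>k\<in>{-int N..int N}. c k * E k x) (\<Sum>\<^sub>\<infinity>k. c k * E k x) < e"
    proof eventually_elim
      case (elim N)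
      show ?case
      proof
        fix x
        have "dist (\<Sum>k\<in>{-int N..int N}. c k * E k x) (\<Sum>\<^sub>\<infinity>k. c k * E k x)
           = norm ((\<Sum>\<^sub>\<infinity>k. c k * E k x) - (\<Sum>k\<in>{-int N..int N}. c k * E k x))"
          by (simp add: dist_norm norm_minus_commute)
        also have "\<dots> \<le> (\<Sum>\<^sub>\<infinity>k. norm (c k)) - (\<Sum>k\<in>{-int N..int N}. norm (c k))"
          by (rule series_tail_bound[OF S])
        also have "\<dots> < e" using elim by (simp add: dist_norm)
        finally show "dist (\<Sum>k\<in>{-int N..int N}. c k * E k x) (\<Sum>\<^sub>\<infinity>k. c k * E k x) < e" .
      qed
    qed
  qed
qed simp

lemma series_integral:
  fixes c :: "int \<Rightarrow> complex" and w :: "real \<Rightarrow> complex"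
  assumes S: "(\<lambda>k. norm (c k)) summable_on UNIV" and w: "continuous_on {0..2*pi} w"
  shows "(\<lambda>k. c k * integral {0..2*pi} (\<lambda>\<theta>. E k \<theta> * w \<theta>)) summable_on UNIV"
    and "integral {0..2*pi} (\<lambda>\<theta>. (\<Sum>\<^sub>\<infinity>k. c k * E k \<theta>) * w \<theta>)
          = (\<Sum>\<^sub>\<infinity>k. c k * integral {0..2*pi} (\<lambda>\<theta>. E k \<theta> * w \<theta>))"
proof -
  obtain B where B: "B \<ge> 0" "\<And>x. x \<in> {0..2*pi} \<Longrightarrow> norm (w x) \<le> B"
    using continuous_on_compact_bound[OF compact_Icc w] by blast
  define I where "I k = integral {0..2*pi} (\<lambda>\<theta>. E k \<theta> * w \<theta>)" for k
  have Ib: "norm (I k) \<le> B * (2*pi)" for k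
    unfolding I_def
    by (rule order.trans[OF integral_bound[where B=B]]) (auto intro!: continuous_intros w simp: norm_mult B)
  have abs: "(\<lambda>k. norm (c k * I k)) summable_on UNIV"
  proof (rule summable_on_comparison_test)
    show "(\<lambda>k. norm (c k) * (B * (2*pi))) summable_on UNIV"
      by (rule summable_on_cmult_left[OF S])
    show "norm (c k * I k) \<le> norm (c k) * (B * (2 * pi))" for k
      by (simp add: norm_mult mult_left_mono Ib)
  qed auto
  then have sm: "(\<lambda>k. c k * I k) summable_on UNIV" by (rule abs_summable_summable)
  then show "(\<lambda>k. c k * integral {0..2*pi} (\<lambda>\<theta>. E k \<theta> * w \<theta>)) summable_on UNIV"
    by (simp add: I_def)
  define g where "g \<theta> = (\<Sum>\<^sub>\<infinity>k. c k * E k \<theta>)" for \<theta>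
  define P where "P N \<theta> = (\<Sum>k\<in>{-int N..int N}. c k * E k \<theta>)" for N \<theta>
  define t where "t N = (\<Sum>\<^sub>\<infinity>k. norm (c k)) - (\<Sum>k\<in>{-int N..int N}. norm (c k))" for N
  have gc: "continuous_on {0..2*pi} g" unfolding g_def by (rule series_cont[OF S])
  have Pc: "continuous_on {0..2*pi} (P N)" for N unfolding P_def by (intro continuous_intros)
  have intP: "integral {0..2*pi} (\<lambda>\<theta>. P N \<theta> * w \<theta>) = (\<Sum>k\<in>{-int N..int N}. c k * I k)" for N
  proof -
    have "integral {0..2*pi} (\<lambda>\<theta>. P N \<theta> * w \<theta>) = integral {0..2*pi} (\<lambda>\<theta>. \<Sum>k\<in>{-int N..int N}. c k * (E k \<theta> * w \<theta>))"
      unfolding P_def by (simp add: sum_distrib_right mult.assoc)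
    also have "\<dots> = (\<Sum>k\<in>{-int N..int N}. integral {0..2*pi} (\<lambda>\<theta>. c k * (E k \<theta> * w \<theta>)))"
      by (rule Henstock_Kurzweil_Integration.integral_sum) (auto intro!: integrable_continuous_interval continuous_intros w)
    also have "\<dots> = (\<Sum>k\<in>{-int N..int N}. c k * I k)"
      by (simp add: I_def)
    finally show ?thesis .
  qed
  have l1: "(\<lambda>N. \<Sum>k\<in>{-int N..int N}. c k * I k) \<longlonglongrightarrow> (\<Sum>\<^sub>\<infinity>k. c k * I k)"
    by (rule infsum_int_tendsto[OF sm])
  have bnd: "norm (integral {0..2*pi} (\<lambda>\<theta>. g \<theta> * w \<theta>) - (\<Sum>k\<in>{-int N..int N}. c k * I k)) \<le> t N * B * (2*pi)" for N
  proof -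
    have "integral {0..2*pi} (\<lambda>\<theta>. g \<theta> * w \<theta>) - (\<Sum>k\<in>{-int N..int N}. c k * I k)
        = integral {0..2*pi} (\<lambda>\<theta>. (g \<theta> - P N \<theta>) * w \<theta>)"
      unfolding intP[symmetric]
      by (subst integral_diff[symmetric]) (auto intro!: integrable_continuous_interval continuous_intros w gc Pc simp: left_diff_distrib)
    also have "norm \<dots> \<le> (t N * B) * (2*pi - 0)"
    proof (rule integral_bound)
      show "continuous_on {0..2*pi} (\<lambda>\<theta>. (g \<theta> - P N \<theta>) * w \<theta>)"
        by (intro continuous_intros w gc Pc)
      fix x assume x: "x \<in> {0..2*pi}"
      have "norm (g x - P N x) \<le> t N" unfolding g_def P_def t_def by (rule series_tail_bound[OF S])
      then show "norm ((g x - P N x) * w x) \<le> t N * B"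
        unfolding norm_mult by (intro mult_mono B x) (auto intro: order.trans[OF norm_ge_zero])
    qed simp
    finally show ?thesis by simp
  qed
  have "(\<lambda>N. t N * B * (2*pi)) \<longlonglongrightarrow> 0 * B * (2*pi)"
    unfolding t_def by (intro tendsto_intros tail_tendsto[OF S])
  then have "(\<lambda>N. t N * B * (2*pi)) \<longlonglongrightarrow> 0" by simp
  then have "(\<lambda>N. integral {0..2*pi} (\<lambda>\<theta>. g \<theta> * w \<theta>) - (\<Sum>k\<in>{-int N..int N}. c k * I k)) \<longlonglongrightarrow> 0"
    by (rule Lim_null_comparison[rotated]) (intro always_eventually allI bnd)
  then have "(\<lambda>N. integral {0..2*pi} (\<lambda>\<theta>. g \<theta> * w \<theta>) - ((\<lambda>N. integral {0..2*pi} (\<lambda>\<theta>. g \<theta> * w \<theta>) - (\<Sum>k\<in>{-int N..int N}. c k * I k)) N)) \<longlonglongrightarrow> integral {0..2*pi} (\<lambda>\<theta>. g \<theta> * w \<theta>) - 0"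
    by (intro tendsto_intros)
  then have "(\<lambda>N. \<Sum>k\<in>{-int N..int N}. c k * I k) \<longlonglongrightarrow> integral {0..2*pi} (\<lambda>\<theta>. g \<theta> * w \<theta>)"
    by simp
  from LIMSEQ_unique[OF this l1]
  show "integral {0..2*pi} (\<lambda>\<theta>. (\<Sum>\<^sub>\<infinity>k. c k * E k \<theta>) * w \<theta>)
          = (\<Sum>\<^sub>\<infinity>k. c k * integral {0..2*pi} (\<lambda>\<theta>. E k \<theta> * w \<theta>))"
    by (simp add: g_def I_def)
qed



lemma summable_inv_sq_nat: "summable (\<lambda>n::nat. 1 / (1 + real n ^ 2))"
proof -
  have s: "summable (\<lambda>n::nat. inverse (real n ^ 2))" by (rule inverse_power_summable) simp
  have "summable (\<lambda>n::nat. 1 / (1 + real (Suc n) ^ 2))"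
  proof (rule summable_comparison_test[OF _ summable_Suc_iff[THEN iffD2, OF s]])
    have "norm (1 / (1 + real (Suc n) ^ 2)) \<le> inverse (real (Suc n) ^ 2)" for n
    proof -
      have "0 < real (Suc n) ^ 2" by simp
      then have "1 / (1 + real (Suc n) ^ 2) \<le> 1 / (real (Suc n) ^ 2)"
        by (intro divide_left_mono) (simp_all add: add_pos_nonneg)
      moreover have "0 \<le> 1 / (1 + real (Suc n) ^ 2)" by (simp add: add_pos_nonneg)
      ultimately show ?thesis by (simp add: inverse_eq_divide)
    qed
    then show "\<exists>N. \<forall>n\<ge>N. norm (1 / (1 + real (Suc n) ^ 2)) \<le> inverse (real (Suc n) ^ 2)"
      by blast
  qed
  then show ?thesis by (subst summable_Suc_iff[symmetric])
qed

lemma summable_inv_sq_int: "(\<lambda>k::int. 1 / (1 + real_of_int k ^ 2)) summable_on UNIV"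
proof -
  let ?h = "\<lambda>k::int. 1 / (1 + real_of_int k ^ 2)"
  have n: "(\<lambda>n::nat. 1 / (1 + real n ^ 2)) summable_on UNIV"
    using summable_inv_sq_nat summable_on_UNIV_nonneg_real_iff[of "\<lambda>n::nat. 1 / (1 + real n ^ 2)"] by simp
  have a: "?h summable_on (int ` UNIV)"
    by (subst summable_on_reindex) (use n in \<open>auto simp: o_def\<close>)
  have b: "?h summable_on ((\<lambda>n. - int n) ` UNIV)"
    by (subst summable_on_reindex) (use n in \<open>auto simp: o_def inj_def\<close>)
  have "UNIV = int ` UNIV \<union> (\<lambda>n. - int n) ` UNIV"
  proof -
    have "k \<in> int ` UNIV \<union> (\<lambda>n. - int n) ` UNIV" for k
    proof (cases "k \<ge> 0")
      case True then show ?thesis by (auto intro!: image_eqI[of k int "nat k"])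
    next
      case False then show ?thesis by (auto intro!: image_eqI[of k "\<lambda>n. - int n" "nat (-k)"])
    qed
    then show ?thesis by blast
  qed
  then show ?thesis using summable_on_union[OF a b] by simp
qed

lemma decay_summable:
  fixes a :: "int \<Rightarrow> complex" and p :: nat
  assumes "\<And>k. \<bar>real_of_int k\<bar>^p * norm (a k) \<le> B1"
      and "\<And>k. \<bar>real_of_int k\<bar>^(p+2) * norm (a k) \<le> B2"
  shows "(\<lambda>k. \<bar>real_of_int k\<bar>^p * norm (a k)) summable_on UNIV"
proof (rule summable_on_comparison_test)
  show "(\<lambda>k::int. (B1 + B2) * (1 / (1 + real_of_int k ^ 2))) summable_on UNIV"
    by (rule summable_on_cmult_right[OF summable_inv_sq_int])
  fix k :: int
  have "(1 + real_of_int k ^ 2) * (\<bar>real_of_int k\<bar>^p * norm (a k))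
      = \<bar>real_of_int k\<bar>^p * norm (a k) + \<bar>real_of_int k\<bar>^(p+2) * norm (a k)"
    by (simp add: algebra_simps power_add power2_eq_square)
  also have "\<dots> \<le> B1 + B2" using assms[of k] by simp
  finally show "\<bar>real_of_int k\<bar>^p * norm (a k) \<le> (B1 + B2) * (1 / (1 + real_of_int k ^ 2))"
    by (simp add: field_simps add_pos_nonneg)
qed auto

lemma E_2pi_neg [simp]: "exp (- (\<i> * of_int k * (2 * of_real pi))) = 1"
  using E_2pi'[of "-k"] by simp

lemma E_cnj_neg [simp]: "cnj (exp (- (\<i> * of_int k * of_real \<theta>))) = exp (\<i> * of_int k * of_real \<theta>)"
  by (simp add: exp_cnj)

lemma fc_alt: "fc U k = integral {0..2*pi} (\<lambda>\<theta>. U \<theta> * E (-k) \<theta>) / (2 * pi)"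
  unfolding fc_def by simp

lemma int_E_fc: "integral {0..2*pi} (\<lambda>\<theta>. E k \<theta> * U \<theta>) = 2 * pi * fc U (-k)"
  unfolding fc_alt by (simp add: mult.commute)

lemma fc_bound:
  assumes "continuous_on {0..2*pi} U" "\<And>x. x \<in> {0..2*pi} \<Longrightarrow> norm (U x) \<le> B"
  shows "norm (fc U k) \<le> B"
proof -
  have "norm (integral {0..2*pi} (\<lambda>\<theta>. U \<theta> * E (-k) \<theta>)) \<le> B * (2*pi - 0)"
    by (rule integral_bound) (simp, intro continuous_intros assms(1), simp add: norm_mult assms(2))
  then show ?thesis unfolding fc_alt by (simp add: norm_divide field_simps)
qed

lemma fc_deriv:
  assumes d: "\<And>x. (U has_vector_derivative U' x) (at x)"
    and c: "continuous_on {0..2*pi} U'" and p: "U (2*pi) = U 0"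
  shows "fc U' k = \<i> * of_int k * fc U k"
proof -
  have cU: "continuous_on {0..2*pi} U"
    using d by (meson continuous_at_imp_continuous_on has_vector_derivative_continuous)
  have dd: "((\<lambda>\<theta>. U \<theta> * E (-k) \<theta>) has_vector_derivative (U \<theta> * (\<i> * of_int (-k) * E (-k) \<theta>) + U' \<theta> * E (-k) \<theta>)) (at \<theta> within {0..2*pi})" for \<theta>
    by (rule has_vector_derivative_mult[OF has_vector_derivative_at_within[OF d] E_deriv])
  have "((\<lambda>\<theta>. U \<theta> * (\<i> * of_int (-k) * E (-k) \<theta>) + U' \<theta> * E (-k) \<theta>) has_integral
          (U (2*pi) * E (-k) (2*pi) - U 0 * E (-k) 0)) {0..2*pi}"
    by (rule fundamental_theorem_of_calculus) (simp, use dd in blast)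
  then have "((\<lambda>\<theta>. U' \<theta> * E (-k) \<theta> + U \<theta> * (\<i> * of_int (-k) * E (-k) \<theta>)) has_integral
          (U (2*pi) * E (-k) (2*pi) - U 0 * E (-k) 0)) {0..2*pi}"
    by (simp add: add.commute)
  then have h: "((\<lambda>\<theta>. U' \<theta> * E (-k) \<theta> + U \<theta> * (\<i> * of_int (-k) * E (-k) \<theta>)) has_integral 0) {0..2*pi}"
    using p by simp
  have i1: "(\<lambda>\<theta>. U' \<theta> * E (-k) \<theta>) integrable_on {0..2*pi}"
    by (intro integrable_continuous_interval continuous_intros c)
  have i2: "(\<lambda>\<theta>. U \<theta> * E (-k) \<theta>) integrable_on {0..2*pi}"
    by (intro integrable_continuous_interval continuous_intros cU)
  have "integral {0..2*pi} (\<lambda>\<theta>. U' \<theta> * E (-k) \<theta> + U \<theta> * (\<i> * of_int (-k) * E (-k) \<theta>)) = 0"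
    using h integral_unique by blast
  moreover have "integral {0..2*pi} (\<lambda>\<theta>. U' \<theta> * E (-k) \<theta> + U \<theta> * (\<i> * of_int (-k) * E (-k) \<theta>))
     = integral {0..2*pi} (\<lambda>\<theta>. U' \<theta> * E (-k) \<theta>) - \<i> * of_int k * integral {0..2*pi} (\<lambda>\<theta>. U \<theta> * E (-k) \<theta>)"
  proof -
    have "integral {0..2*pi} (\<lambda>\<theta>. U' \<theta> * E (-k) \<theta> + U \<theta> * (\<i> * of_int (-k) * E (-k) \<theta>))
        = integral {0..2*pi} (\<lambda>\<theta>. U' \<theta> * E (-k) \<theta> + (- (\<i> * of_int k)) * (U \<theta> * E (-k) \<theta>))"
      by (simp add: algebra_simps)
    also have "\<dots> = integral {0..2*pi} (\<lambda>\<theta>. U' \<theta> * E (-k) \<theta>) + integral {0..2*pi} (\<lambda>\<theta>. (- (\<i> * of_int k)) * (U \<theta> * E (-k) \<theta>))"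
      by (rule integral_add[OF i1]) (intro integrable_on_mult_right i2)
    finally show ?thesis by simp
  qed
  ultimately show ?thesis unfolding fc_alt by (simp add: field_simps)
qed

lemma fc_real_cnj:
  shows "fc (\<lambda>x. complex_of_real (u x)) (-k) = cnj (fc (\<lambda>x. complex_of_real (u x)) k)"
proof -
  have "cnj (integral {0..2*pi} (\<lambda>\<theta>. complex_of_real (u \<theta>) * E (-k) \<theta>))
      = integral {0..2*pi} (\<lambda>\<theta>. complex_of_real (u \<theta>) * E k \<theta>)"
    by (subst integral_cnj) (simp add: E_cnj)
  then show ?thesis unfolding fc_alt by simp
qed





definition tp :: "(complex \<times> int) list \<Rightarrow> real \<Rightarrow> complex" where
  "tp xs \<theta> = (\<Sum>(c,k)\<leftarrow>xs. c * E k \<theta>)"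

lemma tp_Nil [simp]: "tp [] \<theta> = 0" by (simp add: tp_def)
lemma tp_Cons [simp]: "tp ((c,k)#xs) \<theta> = c * E k \<theta> + tp xs \<theta>" by (simp add: tp_def)
lemma tp_append [simp]: "tp (xs @ ys) \<theta> = tp xs \<theta> + tp ys \<theta>" by (simp add: tp_def)

lemma tp_cont [continuous_intros]: "continuous_on S (tp xs)"
  by (induction xs) (auto intro!: continuous_intros)

definition tpmul :: "(complex \<times> int) list \<Rightarrow> (complex \<times> int) list \<Rightarrow> (complex \<times> int) list" where
  "tpmul xs ys = concat (map (\<lambda>(c,k). map (\<lambda>(d,l). (c*d, k+l)) ys) xs)"

lemma tp_scale: "tp (map (\<lambda>(d,l). (c*d, k+l)) ys) \<theta> = c * E k \<theta> * tp ys \<theta>"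
proof (induction ys)
  case (Cons a ys)
  obtain d l where a: "a = (d,l)" by (cases a)
  have "E (k+l) \<theta> = E k \<theta> * E l \<theta>" by (simp add: E_mult)
  then show ?case using Cons by (simp add: a algebra_simps)
qed simp

lemma tp_mul: "tp (tpmul xs ys) \<theta> = tp xs \<theta> * tp ys \<theta>"
proof (induction xs)
  case Nil then show ?case by (simp add: tpmul_def)
next
  case (Cons a xs)
  obtain c k where a: "a = (c,k)" by (cases a)
  have "tpmul (a#xs) ys = map (\<lambda>(d,l). (c*d, k+l)) ys @ tpmul xs ys"
    by (simp add: tpmul_def a)
  then have "tp (tpmul (a#xs) ys) \<theta> = c * E k \<theta> * tp ys \<theta> + tp xs \<theta> * tp ys \<theta>"
    using Cons by (simp only: tp_append tp_scale)
  then show ?case by (simp add: a algebra_simps)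
qed

lemma poly_circle_tp:
  assumes "real_polynomial_function g"
  shows "\<exists>xs. \<forall>\<theta>. complex_of_real (g (cis \<theta>)) = tp xs \<theta>"
  using assms
proof (induction rule: real_polynomial_function.induct)
  case (linear f)
  interpret bounded_linear f by fact
  have "cis \<theta> = cos \<theta> *\<^sub>R 1 + sin \<theta> *\<^sub>R \<i>" for \<theta>
    by (simp add: cis.ctr complex_eq_iff)
  then have fe: "f (cis \<theta>) = cos \<theta> * f 1 + sin \<theta> * f \<i>" for \<theta>
    by (simp add: add scale)
  let ?a = "complex_of_real (f 1)" and ?b = "complex_of_real (f \<i>)"
  have "complex_of_real (f (cis \<theta>)) = tp [(?a/2 - \<i> * ?b / 2, 1), (?a/2 + \<i> * ?b/2, -1)] \<theta>" for \<theta>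
  proof -
    have c: "complex_of_real (cos \<theta>) = (E 1 \<theta> + E (-1) \<theta>) / 2"
      by (simp add: cos_of_real[symmetric] cos_exp_eq)
    have s: "complex_of_real (sin \<theta>) = (E 1 \<theta> - E (-1) \<theta>) / (2*\<i>)"
      by (simp add: sin_of_real[symmetric] sin_exp_eq)
    show ?thesis unfolding fe
      by (simp add: c s field_simps)
  qed
  then show ?case by blast
next
  case (const c)
  have "complex_of_real c = tp [(of_real c, 0)] \<theta>" for \<theta> by simp
  then show ?case by blast
next
  case (add f g)
  then obtain xs ys where "\<forall>\<theta>. complex_of_real (f (cis \<theta>)) = tp xs \<theta>" "\<forall>\<theta>. complex_of_real (g (cis \<theta>)) = tp ys \<theta>"
    by blast
  then have "\<forall>\<theta>. complex_of_real (f (cis \<theta>) + g (cis \<theta>)) = tp (xs @ ys) \<theta>" by simp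
  then show ?case by blast
next
  case (mult f g)
  then obtain xs ys where "\<forall>\<theta>. complex_of_real (f (cis \<theta>)) = tp xs \<theta>" "\<forall>\<theta>. complex_of_real (g (cis \<theta>)) = tp ys \<theta>"
    by blast
  then have "\<forall>\<theta>. complex_of_real (f (cis \<theta>) * g (cis \<theta>)) = tp (tpmul xs ys) \<theta>" by (simp add: tp_mul)
  then show ?case by blast
qed

lemma int_tp_zero:
  assumes c: "continuous_on {0..2*pi} V" and z: "\<And>k. fc V k = 0"
  shows "integral {0..2*pi} (\<lambda>\<theta>. V \<theta> * tp xs \<theta>) = 0"
proof (induction xs)
  case Nil then show ?case by simp
next
  case (Cons a xs)
  obtain d k where a: "a = (d,k)" by (cases a)
  have "integral {0..2*pi} (\<lambda>\<theta>. V \<theta> * tp (a#xs) \<theta>)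
       = integral {0..2*pi} (\<lambda>\<theta>. d * (E k \<theta> * V \<theta>) + V \<theta> * tp xs \<theta>)"
    by (simp add: a algebra_simps)
  also have "\<dots> = integral {0..2*pi} (\<lambda>\<theta>. d * (E k \<theta> * V \<theta>)) + integral {0..2*pi} (\<lambda>\<theta>. V \<theta> * tp xs \<theta>)"
    by (rule integral_add; rule integrable_continuous_interval)
       (rule continuous_on_mult[OF continuous_on_const continuous_on_mult[OF E_cont c]],
        rule continuous_on_mult[OF c tp_cont])
  also have "\<dots> = 0"
    using Cons by (simp add: int_E_fc z)
  finally show ?case .
qed

lemma periodic_nat:
  assumes "\<forall>\<theta>. v (\<theta> + 2*pi) = v \<theta>"
  shows "v (\<theta> + 2*pi*real m) = v \<theta>"
proof (induction m)
  case (Suc m)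
  have "v (\<theta> + 2*pi*real (Suc m)) = v ((\<theta> + 2*pi*real m) + 2*pi)" by (simp add: algebra_simps)
  also have "\<dots> = v (\<theta> + 2*pi*real m)" using assms by blast
  finally show ?case using Suc by simp
qed simp

lemma periodic_int:
  assumes "\<forall>\<theta>. v (\<theta> + 2*pi) = v \<theta>"
  shows "v (\<theta> + 2*pi*real_of_int n) = v \<theta>"
proof (cases "n \<ge> 0")
  case True
  define m where "m = nat n"
  have m: "n = int m" unfolding m_def using True by simp
  have "real_of_int n = real m" unfolding m by (rule of_int_of_nat_eq)
  then show ?thesis using periodic_nat[OF assms, of \<theta> m] by (simp only:)
next
  case False
  define m where "m = nat (-n)"
  have m: "n = - int m" unfolding m_def using False by simp
  have e1: "\<theta> + 2*pi*real_of_int n = \<theta> - 2*pi*real m" unfolding m by simp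
  have e2: "(\<theta> - 2*pi*real m) + 2*pi*real m = \<theta>" by simp
  show ?thesis using periodic_nat[OF assms, of "\<theta> - 2*pi*real m" m] unfolding e1 e2 by simp
qed

lemma Arg2pi_Arg_per:
  assumes per: "\<forall>\<theta>. v (\<theta> + 2*pi) = v \<theta>" and z: "z \<noteq> 0"
  shows "v (Arg2pi z) = v (Arg z)"
proof -
  have ze: "z = of_real (norm z) * exp (\<i> * of_real (Arg z))" using Arg_eq[OF z] by simp
  have nz: "0 < norm z" using z by simp
  show ?thesis
  proof (cases "Arg z \<ge> 0")
    case True
    have "Arg2pi z = Arg z"
      by (rule Arg2pi_unique[OF ze[symmetric] nz True]) (use Arg_le_pi[of z] pi_gt_zero in linarith)
    then show ?thesis by simp
  next
    case False
    have "exp (\<i> * of_real (Arg z + 2*pi)) = exp (\<i> * of_real (Arg z) + \<i> * (of_int 1 * (of_real pi * 2)))"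
      by (simp add: algebra_simps)
    also have "\<dots> = exp (\<i> * of_real (Arg z))" by (rule exp_plus_2pin)
    finally have e: "exp (\<i> * of_real (Arg z + 2*pi)) = exp (\<i> * of_real (Arg z))" .
    have "Arg2pi z = Arg z + 2*pi"
      by (rule Arg2pi_unique[of "norm z"]) (use ze e nz False mpi_less_Arg[of z] in auto)
    then show ?thesis using per by simp
  qed
qed

lemma circ_cont:
  assumes c: "continuous_on UNIV v" and per: "\<forall>\<theta>. v (\<theta> + 2*pi) = v \<theta>"
  shows "continuous_on (sphere 0 1) (\<lambda>z. v (Arg2pi z))"
proof (rule continuous_at_imp_continuous_on, intro ballI)
  fix z :: complex assume "z \<in> sphere 0 1"
  then have z: "z \<noteq> 0" by auto
  have cv: "isCont v x" for x using c by (simp add: continuous_on_eq_continuous_at)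
  show "isCont (\<lambda>z. v (Arg2pi z)) z"
  proof (cases "z \<in> \<real>\<^sub>\<ge>\<^sub>0")
    case False
    then show ?thesis using continuous_at_compose[OF continuous_at_Arg2pi[OF False] cv] by (simp add: o_def)
  next
    case True
    have r: "Re z \<ge> 0" "Im z = 0" using True by (simp_all add: complex_nonneg_Reals_iff)
    have "Re z \<noteq> 0" using z r(2) by (simp add: complex_eq_iff)
    then have "z \<notin> \<real>\<^sub>\<le>\<^sub>0" using r by (simp add: complex_nonpos_Reals_iff)
    then have "isCont (\<lambda>z. v (Arg z)) z"
      using continuous_at_compose[OF continuous_at_Arg cv] by (simp add: o_def)
    moreover have "eventually (\<lambda>x. v (Arg2pi x) = v (Arg x)) (nhds z)"
    proof -
      have "eventually (\<lambda>x. x \<in> -{0}) (nhds z)"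
        by (rule eventually_nhds_in_open) (use z in auto)
      then show ?thesis by eventually_elim (use Arg2pi_Arg_per[OF per] in auto)
    qed
    ultimately show ?thesis using isCont_cong[of "\<lambda>x. v (Arg2pi x)" "\<lambda>x. v (Arg x)" z] by simp
  qed
qed

lemma F_cis:
  assumes per: "\<forall>\<theta>. v (\<theta> + 2*pi) = v \<theta>" and t: "\<theta> \<in> {0..2*pi}"
  shows "v (Arg2pi (cis \<theta>)) = v \<theta>"
proof (cases "\<theta> < 2*pi")
  case True
  have "Arg2pi (cis \<theta>) = \<theta>"
    by (rule Arg2pi_unique[of 1]) (use t True in \<open>auto simp: cis_conv_exp\<close>)
  then show ?thesis by simp
next
  case False
  then have "\<theta> = 2*pi" using t by auto
  then show ?thesis using per[rule_format, of 0] Arg2pi_of_real[of 1] by simp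
qed

lemma fourier_unique:
  fixes v :: "real \<Rightarrow> real"
  assumes c: "continuous_on UNIV v" and per: "\<forall>\<theta>. v (\<theta> + 2*pi) = v \<theta>"
    and z: "\<And>k. fc (\<lambda>x. complex_of_real (v x)) k = 0"
  shows "v \<theta> = 0"
proof -
  define V where "V x = complex_of_real (v x)" for x
  have cv: "continuous_on S v" for S using c continuous_on_subset by blast
  have cV: "continuous_on {0..2*pi} V" unfolding V_def by (intro continuous_intros cv)
  obtain B where B: "B \<ge> 0" "\<And>x. x \<in> {0..2*pi} \<Longrightarrow> norm (V x) \<le> B"
    using continuous_on_compact_bound[OF compact_Icc cV] by blast
  have zV: "fc V k = 0" for k using z unfolding V_def by simp
  have cF: "continuous_on (sphere 0 1) (\<lambda>z. v (Arg2pi z))" by (rule circ_cont[OF c per])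
  let ?J = "integral {0..2*pi} (\<lambda>\<theta>. V \<theta> * V \<theta>)"
  have Jb: "norm ?J \<le> B * e * (2*pi)" if e: "e > 0" for e
  proof -
    obtain g where g: "real_polynomial_function g" "\<And>x. x \<in> sphere 0 1 \<Longrightarrow> \<bar>v (Arg2pi x) - g x\<bar> < e"
      using Stone_Weierstrass_real_polynomial_function[OF compact_sphere cF e] by blast
    obtain xs where xs: "\<And>\<theta>. complex_of_real (g (cis \<theta>)) = tp xs \<theta>"
      using poly_circle_tp[OF g(1)] by blast
    have "?J = ?J - integral {0..2*pi} (\<lambda>\<theta>. V \<theta> * tp xs \<theta>)"
      using int_tp_zero[OF cV zV] by simp
    also have "\<dots> = integral {0..2*pi} (\<lambda>\<theta>. V \<theta> * V \<theta> - V \<theta> * tp xs \<theta>)"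
      by (rule integral_diff[symmetric]; rule integrable_continuous_interval)
         (rule continuous_on_mult[OF cV cV], rule continuous_on_mult[OF cV tp_cont])
    also have "\<dots> = integral {0..2*pi} (\<lambda>\<theta>. V \<theta> * (V \<theta> - tp xs \<theta>))"
      by (simp only: right_diff_distrib)
    also have "norm \<dots> \<le> (B * e) * (2*pi - 0)"
    proof (rule integral_bound)
      fix x assume x: "x \<in> {0..2*pi}"
      have "V x - tp xs x = complex_of_real (v (Arg2pi (cis x)) - g (cis x))"
        using F_cis[OF per x] xs[of x] by (simp add: V_def)
      moreover have "\<bar>v (Arg2pi (cis x)) - g (cis x)\<bar> < e" using g(2)[of "cis x"] by simp
      ultimately have "norm (V x - tp xs x) \<le> e" by (metis norm_of_real less_imp_le)
      then show "norm (V x * (V x - tp xs x)) \<le> B * e"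
        unfolding norm_mult by (intro mult_mono B x) auto
    next
      show "0 \<le> 2*pi" by simp
      show "continuous_on {0..2*pi} (\<lambda>\<theta>. V \<theta> * (V \<theta> - tp xs \<theta>))"
        by (rule continuous_on_mult[OF cV continuous_on_diff[OF cV tp_cont]])
    qed
    finally show ?thesis by simp
  qed
  have J0: "?J = 0"
  proof (rule ccontr)
    assume "?J \<noteq> 0"
    then have pos: "norm ?J > 0" by simp
    define e where "e = norm ?J / ((B + 1) * (2*pi))"
    have Bp: "B + 1 > 0" using B by simp
    have "e > 0" unfolding e_def using pos Bp by simp
    from Jb[OF this] have "norm ?J \<le> B * e * (2*pi)" .
    also have "\<dots> = norm ?J * (B / (B + 1))" unfolding e_def using Bp by simp
    also have "\<dots> < norm ?J * 1" using pos Bp by (intro mult_strict_left_mono) simp_all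
    also have "\<dots> = norm ?J" by simp
    finally show False by simp
  qed
  have "((\<lambda>\<theta>. v \<theta> * v \<theta>) has_integral integral {0..2*pi} (\<lambda>\<theta>. v \<theta> * v \<theta>)) {0..2*pi}"
    by (intro integrable_integral integrable_continuous_interval continuous_intros cv)
  from has_integral_of_real[OF this, where 'b=complex]
  have "?J = complex_of_real (integral {0..2*pi} (\<lambda>\<theta>. v \<theta> * v \<theta>))"
    unfolding V_def by (simp add: integral_unique)
  with J0 have r0: "integral {0..2*pi} (\<lambda>\<theta>. v \<theta> * v \<theta>) = 0" by simp
  have cvv: "continuous_on {0..2*pi} (\<lambda>\<theta>. v \<theta> * v \<theta>)" by (intro continuous_intros cv)
  have "\<forall>x\<in>{0..2*pi}. v x * v x = 0"
    using integral_eq_0_iff[OF cvv] r0 by simp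
  then have v0: "\<And>x. x \<in> {0..2*pi} \<Longrightarrow> v x = 0" by simp
  define n where "n = \<lfloor>\<theta> / (2*pi)\<rfloor>"
  define x where "x = \<theta> - 2*pi*real_of_int n"
  have "real_of_int n \<le> \<theta> / (2*pi)" "\<theta> / (2*pi) < real_of_int n + 1" unfolding n_def by linarith+
  then have "2*pi*real_of_int n \<le> \<theta>" "\<theta> < 2*pi*real_of_int n + 2*pi"
    by (simp_all add: field_simps)
  then have x: "x \<in> {0..2*pi}" unfolding x_def by auto
  have "v \<theta> = v (x + 2*pi*real_of_int n)" unfolding x_def by simp
  also have "\<dots> = v x" by (rule periodic_int[OF per])
  finally show ?thesis using v0[OF x] by simp
qed




lemma fc_cmult: "fc (\<lambda>\<theta>. c * f \<theta>) k = c * fc f k"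
  unfolding fc_def by (simp add: mult.assoc)

lemma infsum_of_real':
  assumes "f summable_on A"
  shows "(\<Sum>\<^sub>\<infinity>x\<in>A. complex_of_real (f x)) = complex_of_real (\<Sum>\<^sub>\<infinity>x\<in>A. f x)"
  using has_sum_of_real[OF has_sum_infsum[OF assms]] infsumI by blast

lemma infsum_at_single:
  fixes f :: "int \<Rightarrow> complex"
  assumes "\<And>k. k \<noteq> m \<Longrightarrow> f k = 0"
  shows "(\<Sum>\<^sub>\<infinity>k. f k) = f m"
proof -
  have "(\<Sum>\<^sub>\<infinity>k. f k) = (\<Sum>\<^sub>\<infinity>k\<in>{m}. f k)"
    by (rule infsum_cong_neutral) (use assms in auto)
  then show ?thesis by simp
qed

locale sp =
  fixes u0 u1 u2 u3 :: "real \<Rightarrow> real"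
  assumes d0: "\<And>x. (u0 has_real_derivative u1 x) (at x)"
    and d1: "\<And>x. (u1 has_real_derivative u2 x) (at x)"
    and d2: "\<And>x. (u2 has_real_derivative u3 x) (at x)"
    and c3: "continuous_on UNIV u3"
    and p0: "\<And>x. u0 (x + 2*pi) = u0 x"
    and p1: "\<And>x. u1 (x + 2*pi) = u1 x"
    and p2: "\<And>x. u2 (x + 2*pi) = u2 x"
begin

abbreviation "U0 \<equiv> (\<lambda>x. complex_of_real (u0 x))"
abbreviation "U1 \<equiv> (\<lambda>x. complex_of_real (u1 x))"
abbreviation "U2 \<equiv> (\<lambda>x. complex_of_real (u2 x))"
abbreviation "U3 \<equiv> (\<lambda>x. complex_of_real (u3 x))"
definition "a k = fc U0 k"

lemma vd0: "(U0 has_vector_derivative U1 x) (at x)"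
  by (rule has_vector_derivative_of_real[OF d0])
lemma vd1: "(U1 has_vector_derivative U2 x) (at x)"
  by (rule has_vector_derivative_of_real[OF d1])
lemma vd2: "(U2 has_vector_derivative U3 x) (at x)"
  by (rule has_vector_derivative_of_real[OF d2])

lemma cu0: "continuous_on S u0"
  using d0 by (meson DERIV_continuous continuous_at_imp_continuous_on)
lemma cu1: "continuous_on S u1"
  using d1 by (meson DERIV_continuous continuous_at_imp_continuous_on)
lemma cu2: "continuous_on S u2"
  using d2 by (meson DERIV_continuous continuous_at_imp_continuous_on)
lemma cu3: "continuous_on S u3"
  using c3 continuous_on_subset by blast

lemma cU0: "continuous_on S U0" by (intro continuous_intros cu0)
lemma cU1: "continuous_on S U1" by (intro continuous_intros cu1)
lemma cU2: "continuous_on S U2" by (intro continuous_intros cu2)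
lemma cU3: "continuous_on S U3" by (intro continuous_intros cu3)

lemma fc1: "fc U1 k = \<i> * of_int k * a k"
  unfolding a_def by (rule fc_deriv[OF vd0 cU1]) (simp add: p0[of 0, simplified])
lemma fc2: "fc U2 k = \<i> * of_int k * fc U1 k"
  by (rule fc_deriv[OF vd1 cU2]) (simp add: p1[of 0, simplified])
lemma fc3: "fc U3 k = \<i> * of_int k * fc U2 k"
  by (rule fc_deriv[OF vd2 cU3]) (simp add: p2[of 0, simplified])

lemma bnd_exists: "continuous_on {0..2*pi} V \<Longrightarrow> \<exists>B. \<forall>k. norm (fc V k) \<le> B"
  by (metis compact_Icc continuous_on_compact_bound fc_bound)

lemma n1: "norm (fc U1 k) = \<bar>real_of_int k\<bar> * norm (a k)" by (simp add: fc1 norm_mult)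
lemma n2: "norm (fc U2 k) = \<bar>real_of_int k\<bar>^2 * norm (a k)" by (simp add: fc2 n1 norm_mult power2_eq_square)
lemma n3: "norm (fc U3 k) = \<bar>real_of_int k\<bar>^3 * norm (a k)" by (simp add: fc3 n2 norm_mult power3_eq_cube power2_eq_square)

lemma sum_a0: "(\<lambda>k. norm (a k)) summable_on UNIV"
proof -
  obtain B0 where B0: "\<forall>k. norm (fc U0 k) \<le> B0" using bnd_exists[OF cU0] by blast
  obtain B2 where B2: "\<forall>k. norm (fc U2 k) \<le> B2" using bnd_exists[OF cU2] by blast
  have "(\<lambda>k. \<bar>real_of_int k\<bar>^0 * norm (a k)) summable_on UNIV"
  proof (rule decay_summable)
    show "\<bar>real_of_int k\<bar>^0 * norm (a k) \<le> B0" for k using B0 by (simp add: a_def)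
    show "\<bar>real_of_int k\<bar>^(0+2) * norm (a k) \<le> B2" for k
    proof -
      have "\<bar>real_of_int k\<bar>^(0+2) * norm (a k) = norm (fc U2 k)" by (simp only: n2 add_0)
      then show ?thesis using B2 by simp
    qed
  qed
  then show ?thesis by simp
qed

lemma sum_a1: "(\<lambda>k. \<bar>real_of_int k\<bar> * norm (a k)) summable_on UNIV"
proof -
  obtain B1 where B1: "\<forall>k. norm (fc U1 k) \<le> B1" using bnd_exists[OF cU1] by blast
  obtain B3 where B3: "\<forall>k. norm (fc U3 k) \<le> B3" using bnd_exists[OF cU3] by blast
  have "(\<lambda>k. \<bar>real_of_int k\<bar>^1 * norm (a k)) summable_on UNIV"
  proof (rule decay_summable)
    show "\<bar>real_of_int k\<bar>^1 * norm (a k) \<le> B1" for k using B1 n1[of k] by (metis power_one_right)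
    show "\<bar>real_of_int k\<bar>^(1+2) * norm (a k) \<le> B3" for k
    proof -
      have "\<bar>real_of_int k\<bar>^(1+2) * norm (a k) = norm (fc U3 k)" proof -
        have "(1::nat)+2 = 3" by simp
        then show ?thesis by (simp only: n3)
      qed
      then show ?thesis using B3 by simp
    qed
  qed
  then show ?thesis by simp
qed

lemma a_bound0: "\<exists>B. \<forall>k. norm (a k) \<le> B"
  using bnd_exists[OF cU0] by (simp add: a_def)

lemma a_cnj: "a (-k) = cnj (a k)"
  unfolding a_def by (rule fc_real_cnj)

lemma norm_a_neg: "norm (a (-k)) = norm (a k)"
  by (simp add: a_cnj)

end


lemma reindex_neg: "(\<Sum>\<^sub>\<infinity>k::int. f (-k)) = (\<Sum>\<^sub>\<infinity>k. f k)"
proof -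
  have "infsum f (uminus ` UNIV) = infsum (f \<circ> uminus) UNIV"
    by (rule infsum_reindex) simp
  moreover have "uminus ` (UNIV::int set) = UNIV" by (rule surjI[of _ uminus]) simp
  ultimately show ?thesis by (simp add: o_def)
qed

lemma summable_neg: "(\<lambda>k::int. f (-k)) summable_on UNIV \<longleftrightarrow> f summable_on UNIV"
proof -
  have "f summable_on (uminus ` UNIV) \<longleftrightarrow> (f \<circ> uminus) summable_on UNIV"
    by (rule summable_on_reindex) simp
  moreover have "uminus ` (UNIV::int set) = UNIV" by (rule surjI[of _ uminus]) simp
  ultimately show ?thesis by (simp add: o_def)
qed

context sp
begin

definition "q k = \<bar>real_of_int k\<bar> * (norm (a k))\<^sup>2"

lemma q_summable: "q summable_on UNIV"
proof -
  obtain B where B: "\<forall>k. norm (a k) \<le> B" using a_bound0 by blast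
  show ?thesis
  proof (rule summable_on_comparison_test)
    show "(\<lambda>k. B * (\<bar>real_of_int k\<bar> * norm (a k))) summable_on UNIV"
      by (rule summable_on_cmult_right[OF sum_a1])
    show "q k \<le> B * (\<bar>real_of_int k\<bar> * norm (a k))" for k
    proof -
      have "norm (a k) * norm (a k) \<le> norm (a k) * B" using B by (simp add: mult_left_mono)
      then have "\<bar>real_of_int k\<bar> * (norm (a k) * norm (a k)) \<le> \<bar>real_of_int k\<bar> * (norm (a k) * B)"
        by (rule mult_left_mono) simp
      then show ?thesis unfolding q_def power2_eq_square by (simp add: mult_ac)
    qed
    show "0 \<le> q k" for k unfolding q_def by simp
  qed
qed

lemma Lam_U0: "Lam U0 \<theta> = (\<Sum>\<^sub>\<infinity>k. (of_int \<bar>k\<bar> * a k) * E k \<theta>)"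
  unfolding Lam_def a_def by simp

lemma Hil_U0: "Hil U0 \<theta> = (\<Sum>\<^sub>\<infinity>k. (of_int (sgn k) * a k) * E k \<theta>)"
  unfolding Hil_def a_def by simp

lemma Dop_U0: "Dop U0 \<theta> = - \<i> * U1 \<theta>"
  unfolding Dop_def using vector_derivative_at[OF vd0] by simp

lemma sL: "(\<lambda>k. norm (of_int \<bar>k\<bar> * a k)) summable_on UNIV"
  using sum_a1 by (simp add: norm_mult)

lemma sH: "(\<lambda>k. norm (of_int (sgn k) * a k)) summable_on UNIV"
proof (rule summable_on_comparison_test[OF sum_a0])
  show "norm (of_int (sgn k) * a k) \<le> norm (a k)" for k
    by (cases "k = 0") (auto simp: norm_mult sgn_if)
qed auto

lemma cLam: "continuous_on S (Lam U0)"
  unfolding Lam_U0[abs_def] by (rule series_cont[OF sL])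
lemma cHil: "continuous_on S (Hil U0)"
  unfolding Hil_U0[abs_def] by (rule series_cont[OF sH])
lemma cDop: "continuous_on S (Dop U0)"
  unfolding Dop_U0[abs_def] by (rule continuous_on_mult[OF continuous_on_const cU1])

lemma int_LamU: "integral {0..2*pi} (\<lambda>\<theta>. Lam U0 \<theta> * U0 \<theta>) = complex_of_real (2*pi * (\<Sum>\<^sub>\<infinity>k. q k))"
proof -
  have "integral {0..2*pi} (\<lambda>\<theta>. Lam U0 \<theta> * U0 \<theta>)
      = (\<Sum>\<^sub>\<infinity>k. (of_int \<bar>k\<bar> * a k) * integral {0..2*pi} (\<lambda>\<theta>. E k \<theta> * U0 \<theta>))"
    unfolding Lam_U0 by (rule series_integral(2)[OF sL cU0])
  also have "\<dots> = (\<Sum>\<^sub>\<infinity>k. complex_of_real (2*pi * q k))"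
  proof (rule infsum_cong)
    fix k
    have I: "integral {0..2*pi} (\<lambda>\<theta>. E k \<theta> * U0 \<theta>) = complex_of_real (2*pi) * cnj (a k)"
      using int_E_fc[of k U0] by (simp only: a_def[symmetric] a_cnj)
    have Q: "complex_of_real (2*pi * q k) = complex_of_real (2*pi) * of_int \<bar>k\<bar> * complex_of_real ((norm (a k))\<^sup>2)"
    proof -
      have ab: "complex_of_real \<bar>real_of_int k\<bar> = of_int \<bar>k\<bar>" by (metis of_int_abs of_real_of_int_eq)
      show ?thesis by (simp add: q_def ab)
    qed
    have "(of_int \<bar>k\<bar> * a k) * integral {0..2*pi} (\<lambda>\<theta>. E k \<theta> * U0 \<theta>)
        = complex_of_real (2*pi) * of_int \<bar>k\<bar> * (a k * cnj (a k))"
      unfolding I by (simp only: mult_ac)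
    also have "\<dots> = complex_of_real (2*pi * q k)"
      unfolding Q complex_norm_square by (rule refl)
    finally show "(of_int \<bar>k\<bar> * a k) * integral {0..2*pi} (\<lambda>\<theta>. E k \<theta> * U0 \<theta>) = complex_of_real (2*pi * q k)" .
  qed
  also have "\<dots> = complex_of_real (\<Sum>\<^sub>\<infinity>k. 2*pi * q k)"
    by (rule infsum_of_real') (rule summable_on_cmult_right[OF q_summable])
  also have "\<dots> = complex_of_real (2*pi * (\<Sum>\<^sub>\<infinity>k. q k))"
    by (simp add: infsum_cmult_right')
  finally show ?thesis .
qed

lemma fc_Dop: "fc (Dop U0) m = of_int m * a m"
proof -
  have "fc (Dop U0) m = fc (\<lambda>\<theta>. - \<i> * U1 \<theta>) m" unfolding Dop_U0 by simp
  also have "\<dots> = - \<i> * fc U1 m" by (rule fc_cmult)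
  also have "\<dots> = of_int m * a m" unfolding fc1 mult.assoc complex_i_mult_minus by simp
  finally show ?thesis .
qed

lemma int_HilD: "integral {0..2*pi} (\<lambda>\<theta>. Hil U0 \<theta> * Dop U0 \<theta>) = - complex_of_real (2*pi * (\<Sum>\<^sub>\<infinity>k. q k))"
proof -
  have "integral {0..2*pi} (\<lambda>\<theta>. Hil U0 \<theta> * Dop U0 \<theta>)
      = (\<Sum>\<^sub>\<infinity>k. (of_int (sgn k) * a k) * integral {0..2*pi} (\<lambda>\<theta>. E k \<theta> * Dop U0 \<theta>))"
    unfolding Hil_U0 by (rule series_integral(2)[OF sH cDop])
  also have "\<dots> = (\<Sum>\<^sub>\<infinity>k. - complex_of_real (2*pi * q k))"
  proof (rule infsum_cong)
    fix k
    have sk0: "sgn (k::int) * k = \<bar>k\<bar>" by (cases "k > 0"; cases "k = 0") (auto simp: sgn_if)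
    have sk: "of_int (sgn k) * of_int k = (of_int \<bar>k\<bar> :: complex)"
      unfolding sk0[symmetric] by simp
    have I: "integral {0..2*pi} (\<lambda>\<theta>. E k \<theta> * Dop U0 \<theta>) = complex_of_real (2*pi) * (- (of_int k * cnj (a k)))"
      using int_E_fc[of k "Dop U0"] by (simp only: fc_Dop a_cnj of_int_minus mult_minus_left)
    have Q: "complex_of_real (2*pi * q k) = complex_of_real (2*pi) * of_int \<bar>k\<bar> * complex_of_real ((norm (a k))\<^sup>2)"
    proof -
      have ab: "complex_of_real \<bar>real_of_int k\<bar> = of_int \<bar>k\<bar>" by (metis of_int_abs of_real_of_int_eq)
      show ?thesis by (simp add: q_def ab)
    qed
    have "(of_int (sgn k) * a k) * integral {0..2*pi} (\<lambda>\<theta>. E k \<theta> * Dop U0 \<theta>)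
        = - (complex_of_real (2*pi) * (of_int (sgn k) * of_int k) * (a k * cnj (a k)))"
      unfolding I by (simp only: mult_ac mult_minus_right mult_minus_left)
    also have "\<dots> = - complex_of_real (2*pi * q k)"
      unfolding sk Q complex_norm_square by (rule refl)
    finally show "(of_int (sgn k) * a k) * integral {0..2*pi} (\<lambda>\<theta>. E k \<theta> * Dop U0 \<theta>) = - complex_of_real (2*pi * q k)" .
  qed
  also have "\<dots> = - (\<Sum>\<^sub>\<infinity>k. complex_of_real (2*pi * q k))"
    by (rule infsum_uminus)
  also have "(\<Sum>\<^sub>\<infinity>k. complex_of_real (2*pi * q k)) = complex_of_real (\<Sum>\<^sub>\<infinity>k. 2*pi * q k)"
    by (rule infsum_of_real') (rule summable_on_cmult_right[OF q_summable])
  also have "\<dots> = complex_of_real (2*pi * (\<Sum>\<^sub>\<infinity>k. q k))"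
    by (simp add: infsum_cmult_right')
  finally show ?thesis .
qed

lemma int_R: "integral {0..2*pi} (\<lambda>\<theta>. - U0 \<theta> * Lam U0 \<theta> + Hil U0 \<theta> * Dop U0 \<theta>)
   = - complex_of_real (4*pi * (\<Sum>\<^sub>\<infinity>k. q k))"
proof -
  have i1: "(\<lambda>\<theta>. - (Lam U0 \<theta> * U0 \<theta>)) integrable_on {0..2*pi}"
    by (rule integrable_continuous_interval, rule continuous_on_minus, rule continuous_on_mult[OF cLam cU0])
  have i2: "(\<lambda>\<theta>. Hil U0 \<theta> * Dop U0 \<theta>) integrable_on {0..2*pi}"
    by (rule integrable_continuous_interval, rule continuous_on_mult[OF cHil cDop])
  have "integral {0..2*pi} (\<lambda>\<theta>. - U0 \<theta> * Lam U0 \<theta> + Hil U0 \<theta> * Dop U0 \<theta>)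
      = integral {0..2*pi} (\<lambda>\<theta>. - (Lam U0 \<theta> * U0 \<theta>) + Hil U0 \<theta> * Dop U0 \<theta>)"
    by (simp add: mult.commute)
  also have "\<dots> = integral {0..2*pi} (\<lambda>\<theta>. - (Lam U0 \<theta> * U0 \<theta>)) + integral {0..2*pi} (\<lambda>\<theta>. Hil U0 \<theta> * Dop U0 \<theta>)"
    by (rule integral_add[OF i1 i2])
  also have "\<dots> = - complex_of_real (4*pi * (\<Sum>\<^sub>\<infinity>k. q k))"
    by (simp add: int_LamU int_HilD)
  finally show ?thesis .
qed

end


context sp
begin

definition "b k = (if k = 0 then a 0 / 2 else if k \<ge> 1 then a k else 0)"

lemma norm_b_le: "norm (b k) \<le> norm (a k)"
  by (simp add: b_def norm_divide)

lemma sb: "(\<lambda>k. norm (b k)) summable_on UNIV"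
  by (rule summable_on_comparison_test[OF sum_a0]) (auto intro: norm_b_le)

lemma sbL: "(\<lambda>k. norm (of_int \<bar>k\<bar> * b k)) summable_on UNIV"
proof (rule summable_on_comparison_test[OF sum_a1])
  show "norm (of_int \<bar>k\<bar> * b k) \<le> \<bar>real_of_int k\<bar> * norm (a k)" for k
    by (simp add: norm_mult mult_left_mono norm_b_le)
qed auto

lemma pos_part_eq: "pos_part U0 \<theta> = (\<Sum>\<^sub>\<infinity>k. b k * E k \<theta>)"
proof -
  have s: "(\<lambda>k. b k * E k \<theta>) summable_on UNIV"
    by (rule abs_summable_summable) (simp add: norm_mult sb)
  have "(\<Sum>\<^sub>\<infinity>k. b k * E k \<theta>) = sum (\<lambda>k. b k * E k \<theta>) {0} + (\<Sum>\<^sub>\<infinity>k\<in>UNIV-{0}. b k * E k \<theta>)"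
    by (rule infsum_split_finite[OF s]) simp
  also have "(\<Sum>\<^sub>\<infinity>k\<in>UNIV-{0}. b k * E k \<theta>) = (\<Sum>\<^sub>\<infinity>k\<in>{1..}. a k * E k \<theta>)"
    by (rule infsum_cong_neutral) (auto simp: b_def)
  also have "sum (\<lambda>k. b k * E k \<theta>) {0} = a 0 / 2" by (simp add: b_def)
  finally show ?thesis unfolding pos_part_def a_def by simp
qed

lemma P_eq: "pos_part U0 = (\<lambda>\<theta>. \<Sum>\<^sub>\<infinity>k. b k * E k \<theta>)"
  using pos_part_eq by blast

lemma cP: "continuous_on S (pos_part U0)"
  unfolding P_eq by (rule series_cont[OF sb])

lemma EE_int: "integral {0..2*pi} (\<lambda>\<theta>. E k \<theta> * E (-m) \<theta>) = (if k = m then 2*pi else 0)"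
proof -
  have "integral {0..2*pi} (\<lambda>\<theta>. E k \<theta> * E (-m) \<theta>) = integral {0..2*pi} (\<lambda>\<theta>. E (k + -m) \<theta>)"
    by (simp only: E_mult)
  also have "\<dots> = (if k + -m = 0 then 2*pi else 0)" by (rule E_integral')
  finally show ?thesis by simp
qed

lemma fc_P: "fc (pos_part U0) m = b m"
proof -
  have "integral {0..2*pi} (\<lambda>\<theta>. pos_part U0 \<theta> * E (-m) \<theta>)
       = (\<Sum>\<^sub>\<infinity>k. b k * integral {0..2*pi} (\<lambda>\<theta>. E k \<theta> * E (-m) \<theta>))"
    unfolding P_eq by (rule series_integral(2)[OF sb E_cont])
  also have "\<dots> = (\<Sum>\<^sub>\<infinity>k. b k * (if k = m then 2*pi else 0))"
    by (simp only: EE_int)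
  also have "\<dots> = b m * (2*pi)"
    by (subst infsum_at_single[where m=m]) simp_all
  finally show ?thesis unfolding fc_alt by simp
qed

lemma Lam_P: "Lam (pos_part U0) \<theta> = (\<Sum>\<^sub>\<infinity>k. (of_int \<bar>k\<bar> * b k) * E k \<theta>)"
  unfolding Lam_def fc_P by simp

definition "qb k = \<bar>real_of_int k\<bar> * (norm (b k))\<^sup>2"

lemma qb_le: "qb k \<le> q k"
  unfolding qb_def q_def by (intro mult_left_mono power_mono norm_b_le) auto

lemma qb_nonneg: "qb k \<ge> 0" unfolding qb_def by simp

lemma qb_summable: "qb summable_on UNIV"
  by (rule summable_on_comparison_test[OF q_summable qb_le qb_nonneg])

lemma qbn_summable: "(\<lambda>k. qb (-k)) summable_on UNIV"
  using qb_summable summable_neg[of qb] by simp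

lemma q_split: "q k = qb k + qb (-k)"
proof (cases "k = 0")
  case True then show ?thesis by (simp add: q_def qb_def)
next
  case False
  show ?thesis
  proof (cases "k \<ge> 1")
    case True
    then show ?thesis by (simp add: q_def qb_def b_def)
  next
    case False
    with \<open>k \<noteq> 0\<close> have "-k \<ge> 1" by simp
    then show ?thesis using False \<open>k \<noteq> 0\<close> by (simp add: q_def qb_def b_def norm_a_neg)
  qed
qed

lemma sum_q: "(\<Sum>\<^sub>\<infinity>k. q k) = 2 * (\<Sum>\<^sub>\<infinity>k. qb k)"
proof -
  have "(\<Sum>\<^sub>\<infinity>k. q k) = (\<Sum>\<^sub>\<infinity>k. qb k + qb (-k))" by (simp only: q_split)
  also have "\<dots> = (\<Sum>\<^sub>\<infinity>k. qb k) + (\<Sum>\<^sub>\<infinity>k. qb (-k))"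
    by (rule infsum_add[OF qb_summable qbn_summable])
  also have "(\<Sum>\<^sub>\<infinity>k. qb (-k)) = (\<Sum>\<^sub>\<infinity>k. qb k)" by (rule reindex_neg)
  finally show ?thesis by simp
qed

end


context sp
begin

definition "cP k = of_int \<bar>k\<bar> * b k"
definition "dP k = cnj (cP (-k))"

lemma sdP: "(\<lambda>k. norm (dP k)) summable_on UNIV"
proof -
  have "(\<lambda>k. norm (cP k)) summable_on UNIV" using sbL by (simp add: cP_def)
  then have "(\<lambda>k. norm (cP (-k))) summable_on UNIV" using summable_neg[of "\<lambda>k. norm (cP k)"] by simp
  then show ?thesis by (simp add: dP_def)
qed

lemma cnj_LamP: "cnj (Lam (pos_part U0) \<theta>) = (\<Sum>\<^sub>\<infinity>k. dP k * E k \<theta>)"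
proof -
  have "cnj (Lam (pos_part U0) \<theta>) = cnj (\<Sum>\<^sub>\<infinity>k. cP k * E k \<theta>)"
    unfolding Lam_P cP_def by (rule refl)
  also have "\<dots> = (\<Sum>\<^sub>\<infinity>k. cnj (cP k * E k \<theta>))" by (rule infsum_cnj[symmetric])
  also have "\<dots> = (\<Sum>\<^sub>\<infinity>k. cnj (cP k) * E (-k) \<theta>)"
    by (rule infsum_cong) (simp only: complex_cnj_mult E_cnj)
  also have "\<dots> = (\<Sum>\<^sub>\<infinity>k. cnj (cP (-k)) * E (-(-k)) \<theta>)"
    by (rule reindex_neg[of "\<lambda>k. cnj (cP k) * E (-k) \<theta>", symmetric])
  also have "\<dots> = (\<Sum>\<^sub>\<infinity>k. dP k * E k \<theta>)" by (simp only: dP_def minus_minus)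
  finally show ?thesis .
qed

lemma ip_P: "ip (pos_part U0) (Lam (pos_part U0)) = complex_of_real (2*pi * (\<Sum>\<^sub>\<infinity>k. qb k))"
proof -
  have "ip (pos_part U0) (Lam (pos_part U0)) = integral {0..2*pi} (\<lambda>\<theta>. (\<Sum>\<^sub>\<infinity>k. dP k * E k \<theta>) * pos_part U0 \<theta>)"
    unfolding ip_def cnj_LamP by (simp only: mult.commute)
  also have "\<dots> = (\<Sum>\<^sub>\<infinity>k. dP k * integral {0..2*pi} (\<lambda>\<theta>. E k \<theta> * pos_part U0 \<theta>))"
    by (rule series_integral(2)[OF sdP cP])
  also have "\<dots> = (\<Sum>\<^sub>\<infinity>k. complex_of_real (2*pi * qb (-k)))"
  proof (rule infsum_cong)
    fix k :: int
    have I: "integral {0..2*pi} (\<lambda>\<theta>. E k \<theta> * pos_part U0 \<theta>) = complex_of_real (2*pi) * b (-k)"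
      using int_E_fc[of k "pos_part U0"] by (simp only: fc_P)
    have ab: "complex_of_real \<bar>real_of_int k\<bar> = of_int \<bar>k\<bar>" by (metis of_int_abs of_real_of_int_eq)
    have Q: "complex_of_real (2*pi * qb (-k)) = complex_of_real (2*pi) * of_int \<bar>k\<bar> * complex_of_real ((norm (b (-k)))\<^sup>2)"
      by (simp add: qb_def ab)
    have "dP k * integral {0..2*pi} (\<lambda>\<theta>. E k \<theta> * pos_part U0 \<theta>)
        = complex_of_real (2*pi) * of_int \<bar>k\<bar> * (b (-k) * cnj (b (-k)))"
      unfolding I dP_def cP_def by (simp add: mult_ac)
    also have "\<dots> = complex_of_real (2*pi * qb (-k))"
      unfolding Q complex_norm_square by (rule refl)
    finally show "dP k * integral {0..2*pi} (\<lambda>\<theta>. E k \<theta> * pos_part U0 \<theta>) = complex_of_real (2*pi * qb (-k))" .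
  qed
  also have "\<dots> = complex_of_real (\<Sum>\<^sub>\<infinity>k. 2*pi * qb (-k))"
    by (rule infsum_of_real') (rule summable_on_cmult_right[OF qbn_summable])
  also have "(\<Sum>\<^sub>\<infinity>k. 2*pi * qb (-k)) = 2*pi * (\<Sum>\<^sub>\<infinity>k. qb (-k))"
    by (rule infsum_cmult_right')
  also have "(\<Sum>\<^sub>\<infinity>k. qb (-k)) = (\<Sum>\<^sub>\<infinity>k. qb k)" by (rule reindex_neg)
  finally show ?thesis .
qed

lemma T_nonneg: "(\<Sum>\<^sub>\<infinity>k. qb k) \<ge> 0"
  by (rule infsum_nonneg) (simp add: qb_nonneg)

lemma main_eq: "integral {0..2*pi} (\<lambda>\<theta>. - U0 \<theta> * Lam U0 \<theta> + Hil U0 \<theta> * Dop U0 \<theta>)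
   = - 4 * ip (pos_part U0) (Lam (pos_part U0))"
  unfolding int_R ip_P sum_q by simp

lemma ip_real: "ip (pos_part U0) (Lam (pos_part U0)) \<in> \<real>"
  unfolding ip_P by simp

lemma ip_Re: "Re (- 4 * ip (pos_part U0) (Lam (pos_part U0))) \<le> 0"
  unfolding ip_P using T_nonneg by simp

lemma ip_zero_const:
  assumes "ip (pos_part U0) (Lam (pos_part U0)) = 0"
  shows "\<exists>c. \<forall>\<theta>. u0 \<theta> = c"
proof -
  have T0: "(\<Sum>\<^sub>\<infinity>k. qb k) \<le> 0" using assms unfolding ip_P by simp
  have qb0: "qb k = 0" for k
    by (rule nonneg_infsum_le_0D[OF T0 qb_summable]) (simp_all add: qb_nonneg)
  have apos: "a k = 0" if "k \<ge> 1" for k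
  proof -
    have "\<bar>real_of_int k\<bar> * (norm (a k))\<^sup>2 = 0" using qb0[of k] that by (simp add: qb_def b_def)
    then show ?thesis using that by simp
  qed
  have a0: "a k = 0" if "k \<noteq> 0" for k
  proof (cases "k \<ge> 1")
    case True then show ?thesis by (rule apos)
  next
    case False
    with that have "-k \<ge> 1" by simp
    then have "a (-k) = 0" by (rule apos)
    then have "cnj (a k) = 0" using a_cnj[of k] by simp
    then show ?thesis by simp
  qed
  have "fc U1 k = 0" for k
    by (cases "k = 0") (simp_all add: fc1 a0)
  then have u1z: "u1 x = 0" for x
    using fourier_unique[of u1, OF cu1] p1 by blast
  have "\<forall>x. (u0 has_real_derivative 0) (at x)" using d0 u1z by metis
  then have "u0 \<theta> = u0 0" for \<theta> by (rule DERIV_isconst_all)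
  then show ?thesis by blast
qed

end


lemma smooth_props:
  assumes "smooth_on S f"
  shows "continuous_on S f" "\<forall>x\<in>S. f differentiable (at x within S)"
    "\<And>v. smooth_on S (\<lambda>x. frechet_derivative f (at x within S) v)"
  using assms by (auto elim: smooth_on.cases)

lemma partial_snd:
  fixes f :: "real \<times> real \<Rightarrow> real"
  assumes sm: "smooth_on (I \<times> UNIV) f" and t: "\<tau> \<in> I"
  shows "((\<lambda>\<theta>. f (\<tau>,\<theta>)) has_real_derivative frechet_derivative f (at (\<tau>,\<theta>) within I \<times> UNIV) (0,1)) (at \<theta>)"
proof -
  let ?D = "frechet_derivative f (at (\<tau>,\<theta>) within I \<times> UNIV)"
  have "f differentiable (at (\<tau>,\<theta>) within I \<times> UNIV)" using smooth_props(2)[OF sm] t by auto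
  then have fd: "(f has_derivative ?D) (at (\<tau>,\<theta>) within I \<times> UNIV)" by (simp add: frechet_derivative_works)
  have gd: "((\<lambda>\<theta>. (\<tau>,\<theta>)) has_derivative (\<lambda>h. (0,h))) (at \<theta> within UNIV)"
    by (rule has_derivative_Pair[OF has_derivative_const has_derivative_ident])
  have fd': "(f has_derivative ?D) (at (\<tau>,\<theta>) within (\<lambda>\<theta>. (\<tau>,\<theta>)) ` UNIV)"
    by (rule has_derivative_subset[OF fd]) (use t in auto)
  have "((\<lambda>\<theta>. f (\<tau>,\<theta>)) has_derivative (\<lambda>h. ?D (0,h))) (at \<theta> within UNIV)"
    by (rule has_derivative_in_compose[OF gd fd'])
  moreover have "(\<lambda>h. ?D (0,h)) = (\<lambda>h. ?D (0,1) * h)"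
  proof
    fix h :: real
    interpret bounded_linear ?D by (rule has_derivative_bounded_linear[OF fd])
    have "?D (h *\<^sub>R (0,1)) = h *\<^sub>R ?D (0,1)" by (rule scale)
    then show "?D (0,h) = ?D (0,1) * h" by (simp add: mult.commute)
  qed
  ultimately show ?thesis by (simp add: has_field_derivative_def)
qed

lemma partial_fst:
  fixes f :: "real \<times> real \<Rightarrow> real"
  assumes sm: "smooth_on (I \<times> UNIV) f" and t: "\<tau> \<in> I"
  shows "((\<lambda>t. f (t,\<theta>)) has_real_derivative frechet_derivative f (at (\<tau>,\<theta>) within I \<times> UNIV) (1,0)) (at \<tau> within I)"
proof -
  let ?D = "frechet_derivative f (at (\<tau>,\<theta>) within I \<times> UNIV)"
  have "f differentiable (at (\<tau>,\<theta>) within I \<times> UNIV)" using smooth_props(2)[OF sm] t by auto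
  then have fd: "(f has_derivative ?D) (at (\<tau>,\<theta>) within I \<times> UNIV)" by (simp add: frechet_derivative_works)
  have gd: "((\<lambda>t. (t,\<theta>)) has_derivative (\<lambda>h. (h,0))) (at \<tau> within I)"
    by (rule has_derivative_Pair[OF has_derivative_ident has_derivative_const])
  have fd': "(f has_derivative ?D) (at (\<tau>,\<theta>) within (\<lambda>t. (t,\<theta>)) ` I)"
    by (rule has_derivative_subset[OF fd]) auto
  have "((\<lambda>t. f (t,\<theta>)) has_derivative (\<lambda>h. ?D (h,0))) (at \<tau> within I)"
    by (rule has_derivative_in_compose[OF gd fd'])
  moreover have "(\<lambda>h. ?D (h,0)) = (\<lambda>h. ?D (1,0) * h)"
  proof
    fix h :: real
    interpret bounded_linear ?D by (rule has_derivative_bounded_linear[OF fd])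
    have "?D (h *\<^sub>R (1,0)) = h *\<^sub>R ?D (1,0)" by (rule scale)
    then show "?D (h,0) = ?D (1,0) * h" by (simp add: mult.commute)
  qed
  ultimately show ?thesis by (simp add: has_field_derivative_def)
qed

lemma per_deriv:
  fixes f f' :: "real \<Rightarrow> real"
  assumes d: "\<And>x. (f has_real_derivative f' x) (at x)" and p: "\<And>x. f (x + 2*pi) = f x"
  shows "f' (x + 2*pi) = f' x"
proof -
  have "((\<lambda>x. f (x + 2*pi)) has_real_derivative f' (x + 2*pi)) (at x)"
    using d[of "x + 2*pi"] DERIV_shift by blast
  moreover have "(\<lambda>x. f (x + 2*pi)) = f" using p by blast
  ultimately have "(f has_real_derivative f' (x + 2*pi)) (at x)" by simp
  then show ?thesis using d[of x] DERIV_unique by blast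
qed


locale setting =
  fixes I :: "real set" and \<alpha> :: "real \<Rightarrow> real \<Rightarrow> real"
  assumes intv: "is_interval I"
    and sm: "smooth_on (I \<times> UNIV) (\<lambda>(\<tau>, \<theta>). \<alpha> \<tau> \<theta>)"
    and per: "\<forall>\<tau>\<in>I. \<forall>\<theta>. \<alpha> \<tau> (\<theta> + 2 * pi) = \<alpha> \<tau> \<theta>"
    and pde: "\<forall>\<tau>\<in>I. \<forall>\<theta>. ((\<lambda>t. complex_of_real (\<alpha> t \<theta>)) has_vector_derivative
            (- complex_of_real (\<alpha> \<tau> \<theta>) * Lam (\<lambda>x. complex_of_real (\<alpha> \<tau> x)) \<theta>
             + Hil (\<lambda>x. complex_of_real (\<alpha> \<tau> x)) \<theta> * Dop (\<lambda>x. complex_of_real (\<alpha> \<tau> x)) \<theta>))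
            (at \<tau> within I)"
begin

definition "f0 = (\<lambda>(\<tau>::real, \<theta>::real). \<alpha> \<tau> \<theta>)"
definition "S = I \<times> (UNIV::real set)"
definition "Fd f = (\<lambda>x. frechet_derivative f (at x within S) (0,1))"
definition "Ft = (\<lambda>x. frechet_derivative f0 (at x within S) (1,0))"

lemma sm0: "smooth_on S f0" using sm unfolding f0_def S_def .
lemma smFd: "smooth_on S f \<Longrightarrow> smooth_on S (Fd f)" unfolding Fd_def by (rule smooth_props(3))
lemma smFt: "smooth_on S Ft" unfolding Ft_def by (rule smooth_props(3)[OF sm0])

lemma dFd: "smooth_on S f \<Longrightarrow> \<tau> \<in> I \<Longrightarrow> ((\<lambda>\<theta>. f (\<tau>,\<theta>)) has_real_derivative Fd f (\<tau>,x)) (at x)"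
  unfolding Fd_def S_def by (rule partial_snd) (simp_all add: S_def)

lemma f0_eq: "(\<lambda>\<theta>. f0 (\<tau>,\<theta>)) = \<alpha> \<tau>" by (simp add: f0_def)

lemma sp_at: assumes t: "\<tau> \<in> I"
  shows "sp (\<alpha> \<tau>) (\<lambda>\<theta>. Fd f0 (\<tau>,\<theta>)) (\<lambda>\<theta>. Fd (Fd f0) (\<tau>,\<theta>)) (\<lambda>\<theta>. Fd (Fd (Fd f0)) (\<tau>,\<theta>))"
proof -
  have s1: "smooth_on S (Fd f0)" by (rule smFd[OF sm0])
  have s2: "smooth_on S (Fd (Fd f0))" by (rule smFd[OF s1])
  have s3: "smooth_on S (Fd (Fd (Fd f0)))" by (rule smFd[OF s2])
  have d0: "\<And>x. (\<alpha> \<tau> has_real_derivative Fd f0 (\<tau>,x)) (at x)"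
    using dFd[OF sm0 t] unfolding f0_eq .
  have d1: "\<And>x. ((\<lambda>\<theta>. Fd f0 (\<tau>,\<theta>)) has_real_derivative Fd (Fd f0) (\<tau>,x)) (at x)"
    by (rule dFd[OF s1 t])
  have d2: "\<And>x. ((\<lambda>\<theta>. Fd (Fd f0) (\<tau>,\<theta>)) has_real_derivative Fd (Fd (Fd f0)) (\<tau>,x)) (at x)"
    by (rule dFd[OF s2 t])
  have d3: "\<And>x. ((\<lambda>\<theta>. Fd (Fd (Fd f0)) (\<tau>,\<theta>)) has_real_derivative Fd (Fd (Fd (Fd f0))) (\<tau>,x)) (at x)"
    by (rule dFd[OF s3 t])
  have c3: "continuous_on UNIV (\<lambda>\<theta>. Fd (Fd (Fd f0)) (\<tau>,\<theta>))"
    using d3 by (meson DERIV_continuous continuous_at_imp_continuous_on)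
  have p0: "\<And>x. \<alpha> \<tau> (x + 2*pi) = \<alpha> \<tau> x" using per t by blast
  have p1: "\<And>x. Fd f0 (\<tau>, x + 2*pi) = Fd f0 (\<tau>, x)"
    using per_deriv[OF d0 p0] .
  have p2: "\<And>x. Fd (Fd f0) (\<tau>, x + 2*pi) = Fd (Fd f0) (\<tau>, x)"
    using per_deriv[OF d1 p1] .
  show ?thesis by unfold_locales (fact d0 d1 d2 c3 p0 p1 p2)+
qed

lemma cont_alpha: "\<tau> \<in> I \<Longrightarrow> continuous_on UNIV (\<alpha> \<tau>)"
  using dFd[OF sm0, of \<tau>] unfolding f0_eq by (meson DERIV_continuous continuous_at_imp_continuous_on)

definition "Dv \<tau> = integral {0..2*pi} (\<lambda>\<theta>. Ft (\<tau>,\<theta>))"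

lemma leib: assumes t: "\<tau> \<in> I"
  shows "((\<lambda>t. integral {0..2*pi} (\<alpha> t)) has_real_derivative Dv \<tau>) (at \<tau> within I)"
proof -
  have "((\<lambda>t. integral (cbox 0 (2*pi)) (\<alpha> t)) has_field_derivative integral (cbox 0 (2*pi)) (\<lambda>\<theta>. Ft (\<tau>,\<theta>))) (at \<tau> within I)"
  proof (rule leibniz_rule_field_derivative[where fx="\<lambda>x t. Ft (x,t)"])
    fix x t assume x: "x \<in> I"
    show "((\<lambda>x. \<alpha> x t) has_field_derivative Ft (x, t)) (at x within I)"
      using partial_fst[OF sm0[unfolded S_def] x, of t] unfolding Ft_def S_def by (simp add: f0_def)
  next
    fix x assume x: "x \<in> I"
    show "\<alpha> x integrable_on cbox 0 (2*pi)"
      by (rule integrable_continuous) (rule continuous_on_subset[OF cont_alpha[OF x]], simp)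
  next
    have "continuous_on S Ft" by (rule smooth_props(1)[OF smFt])
    then show "continuous_on (I \<times> cbox 0 (2*pi)) (\<lambda>(x, t). Ft (x, t))"
      unfolding case_prod_eta by (rule continuous_on_subset) (auto simp: S_def)
  next
    show "\<tau> \<in> I" by (rule t)
    show "convex I" by (rule is_interval_convex[OF intv])
  qed
  then show ?thesis unfolding Dv_def by simp
qed

lemma Dv_val: assumes t: "\<tau> \<in> I" and nb: "at \<tau> within I \<noteq> bot"
  shows "complex_of_real (Dv \<tau>) = - 4 * ip (pos_part (\<lambda>x. complex_of_real (\<alpha> \<tau> x))) (Lam (pos_part (\<lambda>x. complex_of_real (\<alpha> \<tau> x))))"
proof -
  interpret sp "\<alpha> \<tau>" "\<lambda>\<theta>. Fd f0 (\<tau>,\<theta>)" "\<lambda>\<theta>. Fd (Fd f0) (\<tau>,\<theta>)" "\<lambda>\<theta>. Fd (Fd (Fd f0)) (\<tau>,\<theta>)"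
    by (rule sp_at[OF t])
  have cFt: "continuous_on {0..2*pi} (\<lambda>\<theta>. Ft (\<tau>,\<theta>))"
  proof -
    have "continuous_on S Ft" by (rule smooth_props(1)[OF smFt])
    then have "continuous_on ((\<lambda>\<theta>. (\<tau>,\<theta>)) ` {0..2*pi}) Ft"
      by (rule continuous_on_subset) (auto simp: S_def t)
    then show ?thesis
      by (rule continuous_on_compose2[of _ Ft _ "\<lambda>\<theta>. (\<tau>,\<theta>)"]) (auto intro: continuous_on_Pair continuous_on_const continuous_on_id)
  qed
  have "((\<lambda>\<theta>. Ft (\<tau>,\<theta>)) has_integral Dv \<tau>) {0..2*pi}"
    unfolding Dv_def by (rule integrable_integral, rule integrable_continuous_interval[OF cFt])
  from has_integral_of_real[OF this, where 'b=complex]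
  have "complex_of_real (Dv \<tau>) = integral {0..2*pi} (\<lambda>\<theta>. complex_of_real (Ft (\<tau>,\<theta>)))"
    by (simp add: integral_unique)
  also have "\<dots> = integral {0..2*pi} (\<lambda>\<theta>. - U0 \<theta> * Lam U0 \<theta> + Hil U0 \<theta> * Dop U0 \<theta>)"
  proof (rule integral_cong)
    fix \<theta>
    have h1: "((\<lambda>t. complex_of_real (\<alpha> t \<theta>)) has_vector_derivative complex_of_real (Ft (\<tau>,\<theta>))) (at \<tau> within I)"
      using has_vector_derivative_of_real[OF partial_fst[OF sm0[unfolded S_def] t, of \<theta>]]
      unfolding Ft_def S_def by (simp add: f0_def)
    have h2: "((\<lambda>t. complex_of_real (\<alpha> t \<theta>)) has_vector_derivative (- U0 \<theta> * Lam U0 \<theta> + Hil U0 \<theta> * Dop U0 \<theta>)) (at \<tau> within I)"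
      using pde t by blast
    show "complex_of_real (Ft (\<tau>,\<theta>)) = - U0 \<theta> * Lam U0 \<theta> + Hil U0 \<theta> * Dop U0 \<theta>"
      by (rule vector_derivative_unique_within[OF nb h1 h2])
  qed
  also have "\<dots> = - 4 * ip (pos_part U0) (Lam (pos_part U0))" by (rule main_eq)
  finally show ?thesis .
qed

end


context setting
begin

lemma Dv_nonpos: assumes t: "\<tau> \<in> I" and nb: "at \<tau> within I \<noteq> bot"
  shows "Dv \<tau> \<le> 0"
proof -
  interpret sp "\<alpha> \<tau>" "\<lambda>\<theta>. Fd f0 (\<tau>,\<theta>)" "\<lambda>\<theta>. Fd (Fd f0) (\<tau>,\<theta>)" "\<lambda>\<theta>. Fd (Fd (Fd f0)) (\<tau>,\<theta>)"
    by (rule sp_at[OF t])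
  have "Dv \<tau> = Re (complex_of_real (Dv \<tau>))" by simp
  also have "\<dots> = Re (- 4 * ip (pos_part U0) (Lam (pos_part U0)))" using Dv_val[OF t nb] by simp
  also have "\<dots> \<le> 0" by (rule ip_Re)
  finally show ?thesis .
qed

lemma part1: assumes t: "\<tau> \<in> I"
  shows "((\<lambda>t. complex_of_real (integral {0..2*pi} (\<alpha> t))) has_vector_derivative
               (- 4 * ip (pos_part (\<lambda>x. complex_of_real (\<alpha> \<tau> x)))
                         (Lam (pos_part (\<lambda>x. complex_of_real (\<alpha> \<tau> x)))))) (at \<tau> within I)
          \<and> (- 4 * ip (pos_part (\<lambda>x. complex_of_real (\<alpha> \<tau> x)))
                      (Lam (pos_part (\<lambda>x. complex_of_real (\<alpha> \<tau> x))))) \<in> \<real>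
          \<and> Re (- 4 * ip (pos_part (\<lambda>x. complex_of_real (\<alpha> \<tau> x)))
                         (Lam (pos_part (\<lambda>x. complex_of_real (\<alpha> \<tau> x))))) \<le> 0"
proof -
  interpret sp "\<alpha> \<tau>" "\<lambda>\<theta>. Fd f0 (\<tau>,\<theta>)" "\<lambda>\<theta>. Fd (Fd f0) (\<tau>,\<theta>)" "\<lambda>\<theta>. Fd (Fd (Fd f0)) (\<tau>,\<theta>)"
    by (rule sp_at[OF t])
  have r: "- 4 * ip (pos_part U0) (Lam (pos_part U0)) \<in> \<real>"
    using ip_real by (simp add: Reals_mult)
  have d: "((\<lambda>t. complex_of_real (integral {0..2*pi} (\<alpha> t))) has_vector_derivative
               (- 4 * ip (pos_part U0) (Lam (pos_part U0)))) (at \<tau> within I)"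
  proof (cases "at \<tau> within I = bot")
    case True
    show ?thesis unfolding True has_vector_derivative_def has_derivative_def
      by (intro conjI bounded_linear_scaleR_left tendsto_bot)
  next
    case False
    have "((\<lambda>x. complex_of_real (integral {0..2*pi} (\<alpha> x))) has_vector_derivative complex_of_real (Dv \<tau>)) (at \<tau> within I)"
      by (rule has_vector_derivative_of_real[OF leib[OF t]])
    then show ?thesis unfolding Dv_val[OF t False] .
  qed
  show ?thesis using d r ip_Re by (intro conjI)
qed

lemma part2: assumes s: "s \<in> I" and t: "t \<in> I" and st: "s \<le> t"
  shows "integral {0..2*pi} (\<alpha> t) \<le> integral {0..2*pi} (\<alpha> s)"
proof (cases "s = t")
  case True then show ?thesis by simp
next
  case False
  with st have lt: "s < t" by simp
  have sub: "{s..t} \<subseteq> I"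
  proof
    fix x assume "x \<in> {s..t}"
    then show "x \<in> I" using mem_is_interval_1_I[OF intv s t] by simp
  qed
  have nb: "at x within I \<noteq> bot" if "x \<in> {s..t}" for x
  proof -
    have "x islimpt {s..t}" using that lt by simp
    then have "x islimpt I" using sub islimpt_subset by blast
    then show ?thesis using trivial_limit_within by blast
  qed
  have D: "((\<lambda>t. integral {0..2*pi} (\<alpha> t)) has_derivative (\<lambda>h. Dv x * h)) (at x within {s..t})"
    if "s \<le> x" "x \<le> t" for x
  proof -
    have "x \<in> I" using sub that by auto
    from leib[OF this] have "((\<lambda>t. integral {0..2*pi} (\<alpha> t)) has_derivative (\<lambda>h. Dv x * h)) (at x within I)"
      by (simp add: has_field_derivative_def)
    then show ?thesis by (rule has_derivative_subset) (rule sub)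
  qed
  obtain \<xi> where xi: "\<xi> \<in> {s..t}" "integral {0..2*pi} (\<alpha> t) - integral {0..2*pi} (\<alpha> s) = Dv \<xi> * (t - s)"
    using mvt_very_simple[OF st D] by blast
  have "Dv \<xi> \<le> 0" using Dv_nonpos[OF _ nb[OF xi(1)]] sub xi(1) by blast
  then have "Dv \<xi> * (t - s) \<le> 0" using st by (simp add: mult_nonpos_nonneg)
  then show ?thesis using xi(2) by simp
qed

lemma part3: assumes t: "\<tau> \<in> I"
  and z: "ip (pos_part (\<lambda>x. complex_of_real (\<alpha> \<tau> x))) (Lam (pos_part (\<lambda>x. complex_of_real (\<alpha> \<tau> x)))) = 0"
  shows "\<exists>c. \<forall>\<theta>. \<alpha> \<tau> \<theta> = c"
proof -
  interpret sp "\<alpha> \<tau>" "\<lambda>\<theta>. Fd f0 (\<tau>,\<theta>)" "\<lambda>\<theta>. Fd (Fd f0) (\<tau>,\<theta>)" "\<lambda>\<theta>. Fd (Fd (Fd f0)) (\<tau>,\<theta>)"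
    by (rule sp_at[OF t])
  show ?thesis by (rule ip_zero_const[OF z])
qed

end

theorem lemma6p2:
  fixes I :: "real set" and \<alpha> :: "real \<Rightarrow> real \<Rightarrow> real"
  assumes "is_interval I"
    and "smooth_on (I \<times> UNIV) (\<lambda>(\<tau>, \<theta>). \<alpha> \<tau> \<theta>)"
    and "\<forall>\<tau>\<in>I. \<forall>\<theta>. \<alpha> \<tau> (\<theta> + 2 * pi) = \<alpha> \<tau> \<theta>"
    and "\<forall>\<tau>\<in>I. \<forall>\<theta>. ((\<lambda>t. complex_of_real (\<alpha> t \<theta>)) has_vector_derivative
            (- complex_of_real (\<alpha> \<tau> \<theta>) * Lam (\<lambda>x. complex_of_real (\<alpha> \<tau> x)) \<theta>
             + Hil (\<lambda>x. complex_of_real (\<alpha> \<tau> x)) \<theta> * Dop (\<lambda>x. complex_of_real (\<alpha> \<tau> x)) \<theta>))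
            (at \<tau> within I)"
  shows "(\<forall>\<tau>\<in>I.
            ((\<lambda>t. complex_of_real (integral {0..2*pi} (\<alpha> t))) has_vector_derivative
               (- 4 * ip (pos_part (\<lambda>x. complex_of_real (\<alpha> \<tau> x)))
                         (Lam (pos_part (\<lambda>x. complex_of_real (\<alpha> \<tau> x)))))) (at \<tau> within I)
          \<and> (- 4 * ip (pos_part (\<lambda>x. complex_of_real (\<alpha> \<tau> x)))
                      (Lam (pos_part (\<lambda>x. complex_of_real (\<alpha> \<tau> x))))) \<in> \<real>
          \<and> Re (- 4 * ip (pos_part (\<lambda>x. complex_of_real (\<alpha> \<tau> x)))
                         (Lam (pos_part (\<lambda>x. complex_of_real (\<alpha> \<tau> x))))) \<le> 0)
       \<and> (\<forall>s\<in>I. \<forall>t\<in>I. s \<le> t \<longrightarrow> integral {0..2*pi} (\<alpha> t) \<le> integral {0..2*pi} (\<alpha> s))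
       \<and> (\<forall>\<tau>\<in>I. ip (pos_part (\<lambda>x. complex_of_real (\<alpha> \<tau> x)))
                     (Lam (pos_part (\<lambda>x. complex_of_real (\<alpha> \<tau> x)))) = 0
              \<longrightarrow> (\<exists>c. \<forall>\<theta>. \<alpha> \<tau> \<theta> = c))"
proof -
  interpret setting I \<alpha> by unfold_locales (fact assms)+
  show ?thesis
    apply (intro conjI)
      apply (intro ballI, rule part1, assumption)
     apply (intro ballI impI, rule part2; assumption)
    apply (intro ballI impI, rule part3; assumption)
    done
qed


end
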